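(* Let $g_d=(g_a^j)$ be a discrete $G$-valued field and consider the discrete action $\bar{\mathfrak{S}}_d(g_d)=\sum_{j=0}^{N-1}\sum_{a=0}^{A-1}\bar{\mathcal{L}}_d(\triangle_a^j,g_a^j,\xi_a^j,\eta_a^j)$. (A) $\bar{\mathfrak{S}}_d$ is stationary at $g_d$ for all variations vanishing at all boundary nodes ($j\in\{0,N\}$ or $a\in\{0,A\}$) if and only if the Lie group DCEL equations hold: \[ \tfrac{1}{\Delta t}\big(\mu_a^j-\operatorname{Ad}^*_{\tau(\Delta t\xi_a^{j-1})}\mu_a^{j-1}\big)+\tfrac{1}{\Delta s}\big(\lambda_a^j-\operatorname{Ad}^*_{\tau(\Delta s\eta_{a-1}^j)}\lambda_{a-1}^j\big)=(g_a^j)^{-1}D_g\bar{\mathcal{L}}_a^j,\quad j=1,\dots,N-1,\ a=1,\dots,A-1. \] (B) It is stationary for all variations with $\delta g_a^0=\delta g_a^N=0$ ($a=0,\dots,A$) iff the Lie group DCEL equations hold together with, for $j=1,\dots,N-1$, \[ \tfrac{1}{\Delta t}\big(\mu_0^j-\operatorname{Ad}^*_{\tau(\Delta t\xi_0^{j-1})}\mu_0^{j-1}\big)+\tfrac{1}{\Delta s}\lambda_0^j=(g_0^j)^{-1}D_g\bar{\mathcal{L}}_0^j,\qquad \tfrac{1}{\Delta s}\operatorname{Ad}^*_{\tau(\Delta s\eta_{A-1}^j)}\lambda_{A-1}^j=0 . \] (C) It is stationary for all variations with $\delta g_0^j=\delta g_A^j=0$ ($j=0,\dots,N$) iff the Lie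 group DCEL equations hold together with, for $a=1,\dots,A-1$, \[ \tfrac{1}{\Delta t}\mu_a^0+\tfrac{1}{\Delta s}\big(\lambda_a^0-\operatorname{Ad}^*_{\tau(\Delta s\eta_{a-1}^0)}\lambda_{a-1}^0\big)=(g_a^0)^{-1}D_g\bar{\mathcal{L}}_a^0,\qquad \tfrac{1}{\Delta t}\operatorname{Ad}^*_{\tau(\Delta t\xi_a^{N-1})}\mu_a^{N-1}=0 . \]
   Context: Fix integers $N,A\ge 2$, nodes $(j,a)$, $0\le j\le N$, $0\le a\le A$, triangles $\triangle_a^j=((j,a),(j+1,a),(j,a+1))$ for $j\le N-1$, $a\le A-1$. $G$ is a Lie group with Lie algebra $\mathfrak{g}$; a discrete field is $g_d=(g_a^j)$, $g_a^j\in G$. For $\alpha\in T_g^*G$, $g^{-1}\alpha:=T_e^*L_g(\alpha)\in\mathfrak{g}^*$; $\operatorname{Ad}^*_h$ is the dual of $\operatorname{Ad}_h$. Fix a local diffeomorphism $\tau:\mathfrak{g}\to G$ near $0$ with $\tau(0)=e$, ${\rm d}^R\tau^{-1}_\xi(\eta):=T_{\tau(\xi)}\tau^{-1}(\eta\,\tau(\xi))$. Fix $\Delta t,\Delta s>0$ and set $\xi_a^j=\tau^{-1}((g_a^j)^{-1}g_a^{j+1})/\Delta t$, $\eta_a^j=\tau^{-1}((g_a^j)^{-1}g_{a+1}^j)/\Delta s$ (assumed in the domain of $\tau^{-1}$). A discrete trivialized Lagrangian is smooth $\bar{\mathcal{L}}_d(\triangle_a^j,\cdot,\cdot,\cdot):G\times\mathfrak{g}\times\mathfrak{g}\to\mathbb{R}$;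 $\bar{\mathcal{L}}_a^j$ is its value at $(g_a^j,\xi_a^j,\eta_a^j)$ and $D_g,D_\xi,D_\eta$ its partial derivatives. $\mu_a^j=({\rm d}^R\tau^{-1}_{\Delta t\xi_a^j})^*D_\xi\bar{\mathcal{L}}_a^j$, $\lambda_a^j=({\rm d}^R\tau^{-1}_{\Delta s\eta_a^j})^*D_\eta\bar{\mathcal{L}}_a^j$. Variations are $\delta g_a^j\in T_{g_a^j}G$. *)

theory Defs
  imports "HOL-Analysis.Analysis"
begin

section \<open>Smoothness, embedded submanifolds, Lie groups (extrinsic model)\<close>

text \<open>C-infinity on an open set: a family F of all iterated directional derivatives exists,
  F [] = f and F (v # vs) is the derivative of F vs in direction v.\<close>
definition smooth_on :: "'a::euclidean_space set \<Rightarrow> ('a \<Rightarrow> 'b::real_normed_vector) \<Rightarrow> bool" where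
  "smooth_on S f \<longleftrightarrow> open S \<and>
     (\<exists>F :: 'a list \<Rightarrow> 'a \<Rightarrow> 'b. (\<forall>x\<in>S. F [] x = f x) \<and>
        (\<forall>vs. \<forall>x\<in>S. (F vs has_derivative (\<lambda>v. F (v # vs) x)) (at x)))"

text \<open>Embedded smooth submanifold of a Euclidean space, via slice charts.\<close>
definition embedded_submanifold :: "'e::euclidean_space set \<Rightarrow> bool" where
  "embedded_submanifold M \<longleftrightarrow> (\<forall>p\<in>M. \<exists>U V (\<phi>::'e \<Rightarrow> 'e) \<psi> S.
     open U \<and> p \<in> U \<and> open V \<and> subspace S \<and> smooth_on U \<phi> \<and> smooth_on V \<psi> \<and>
     \<phi> ` U = V \<and> (\<forall>x\<in>U. \<psi> (\<phi> x) = x) \<and> (\<forall>y\<in>V. \<phi> (\<psi> y) = y) \<and>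
     \<phi> ` (M \<inter> U) = V \<inter> S)"

text \<open>A Lie group G embedded in the Euclidean space 'e, with multiplication m, inversion iv
  and identity e; m and iv are smooth maps (given by smooth extensions to open neighbourhoods).\<close>
definition lie_group :: "'e::euclidean_space set \<Rightarrow> ('e \<Rightarrow> 'e \<Rightarrow> 'e) \<Rightarrow> ('e \<Rightarrow> 'e) \<Rightarrow> 'e \<Rightarrow> bool" where
  "lie_group G m iv e \<longleftrightarrow> embedded_submanifold G \<and> e \<in> G \<and>
     (\<forall>x\<in>G. \<forall>y\<in>G. m x y \<in> G) \<and>
     (\<forall>x\<in>G. \<forall>y\<in>G. \<forall>z\<in>G. m (m x y) z = m x (m y z)) \<and>
     (\<forall>x\<in>G. m e x = x \<and> m x e = x) \<and>
     (\<forall>x\<in>G. iv x \<in> G \<and> m (iv x) x = e \<and> m x (iv x) = e) \<and>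
     (\<exists>W. G \<times> G \<subseteq> W \<and> smooth_on W (\<lambda>(x, y). m x y)) \<and>
     (\<exists>W. G \<subseteq> W \<and> smooth_on W iv)"

definition tangent_space :: "'e::euclidean_space set \<Rightarrow> 'e \<Rightarrow> 'e set" where
  "tangent_space G p = {v. \<exists>(\<gamma>::real \<Rightarrow> 'e) \<epsilon>. \<epsilon> > 0 \<and> \<gamma> 0 = p \<and>
      (\<forall>t. \<bar>t\<bar> < \<epsilon> \<longrightarrow> \<gamma> t \<in> G) \<and> (\<gamma> has_vector_derivative v) (at 0)}"

text \<open>Lie algebra = T_e G.  Elements of the dual are represented as functions 'e => real,
  only their values on the Lie algebra being relevant.\<close>
definition lie_alg :: "'e::euclidean_space set \<Rightarrow> 'e \<Rightarrow> 'e set" where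
  "lie_alg G e = tangent_space G e"

definition dLeft :: "('e::euclidean_space \<Rightarrow> 'e \<Rightarrow> 'e) \<Rightarrow> 'e \<Rightarrow> 'e \<Rightarrow> 'e \<Rightarrow> 'e" where
  "dLeft m e g \<zeta> = frechet_derivative (m g) (at e) \<zeta>"

definition dRight :: "('e::euclidean_space \<Rightarrow> 'e \<Rightarrow> 'e) \<Rightarrow> 'e \<Rightarrow> 'e \<Rightarrow> 'e \<Rightarrow> 'e" where
  "dRight m e h \<zeta> = frechet_derivative (\<lambda>x. m x h) (at e) \<zeta>"

definition Ad :: "('e::euclidean_space \<Rightarrow> 'e \<Rightarrow> 'e) \<Rightarrow> ('e \<Rightarrow> 'e) \<Rightarrow> 'e \<Rightarrow> 'e \<Rightarrow> 'e \<Rightarrow> 'e" where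
  "Ad m iv e h \<zeta> = frechet_derivative (\<lambda>x. m (m h x) (iv h)) (at e) \<zeta>"

definition Adstar :: "('e::euclidean_space \<Rightarrow> 'e \<Rightarrow> 'e) \<Rightarrow> ('e \<Rightarrow> 'e) \<Rightarrow> 'e \<Rightarrow> 'e \<Rightarrow> ('e \<Rightarrow> real) \<Rightarrow> ('e \<Rightarrow> real)" where
  "Adstar m iv e h \<mu> = (\<lambda>\<zeta>. \<mu> (Ad m iv e h \<zeta>))"

definition dRtauinv :: "('e::euclidean_space \<Rightarrow> 'e \<Rightarrow> 'e) \<Rightarrow> 'e \<Rightarrow> ('e \<Rightarrow> 'e) \<Rightarrow> ('e \<Rightarrow> 'e) \<Rightarrow> 'e \<Rightarrow> 'e \<Rightarrow> 'e" where
  "dRtauinv m e \<tau> \<tau>inv \<xi> \<eta> = frechet_derivative \<tau>inv (at (\<tau> \<xi>)) (dRight m e (\<tau> \<xi>) \<eta>)"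

definition tau_chart :: "'e::euclidean_space set \<Rightarrow> 'e \<Rightarrow> ('e \<Rightarrow> 'e) \<Rightarrow> ('e \<Rightarrow> 'e) \<Rightarrow> 'e set \<Rightarrow> 'e set \<Rightarrow> bool" where
  "tau_chart G e \<tau> \<tau>inv U V \<longleftrightarrow> open U \<and> 0 \<in> U \<and> open V \<and> e \<in> V \<and> \<tau> 0 = e \<and>
     (\<forall>\<xi>\<in>U \<inter> lie_alg G e. \<tau> \<xi> \<in> G \<inter> V \<and> \<tau>inv (\<tau> \<xi>) = \<xi>) \<and>
     (\<forall>h\<in>G \<inter> V. \<tau>inv h \<in> U \<inter> lie_alg G e \<and> \<tau> (\<tau>inv h) = h) \<and>
     smooth_on U \<tau> \<and> smooth_on V \<tau>inv"

text \<open>A discrete field is gd :: nat => nat => 'e, gd j a = g_a^j.\<close>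
definition dxi :: "('e::euclidean_space \<Rightarrow> 'e \<Rightarrow> 'e) \<Rightarrow> ('e \<Rightarrow> 'e) \<Rightarrow> ('e \<Rightarrow> 'e) \<Rightarrow> real \<Rightarrow> (nat \<Rightarrow> nat \<Rightarrow> 'e) \<Rightarrow> nat \<Rightarrow> nat \<Rightarrow> 'e" where
  "dxi m iv \<tau>inv dt gd j a = (1 / dt) *\<^sub>R \<tau>inv (m (iv (gd j a)) (gd (Suc j) a))"

definition deta :: "('e::euclidean_space \<Rightarrow> 'e \<Rightarrow> 'e) \<Rightarrow> ('e \<Rightarrow> 'e) \<Rightarrow> ('e \<Rightarrow> 'e) \<Rightarrow> real \<Rightarrow> (nat \<Rightarrow> nat \<Rightarrow> 'e) \<Rightarrow> nat \<Rightarrow> nat \<Rightarrow> 'e" where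
  "deta m iv \<tau>inv ds gd j a = (1 / ds) *\<^sub>R \<tau>inv (m (iv (gd j a)) (gd j (Suc a)))"

text \<open>Ld j a g xi eta = discrete trivialized Lagrangian on triangle (j,a).\<close>
definition action :: "('e::euclidean_space \<Rightarrow> 'e \<Rightarrow> 'e) \<Rightarrow> ('e \<Rightarrow> 'e) \<Rightarrow> ('e \<Rightarrow> 'e) \<Rightarrow>
    (nat \<Rightarrow> nat \<Rightarrow> 'e \<Rightarrow> 'e \<Rightarrow> 'e \<Rightarrow> real) \<Rightarrow> real \<Rightarrow> real \<Rightarrow> nat \<Rightarrow> nat \<Rightarrow> (nat \<Rightarrow> nat \<Rightarrow> 'e) \<Rightarrow> real" where
  "action m iv \<tau>inv Ld dt ds N A gd =
     (\<Sum>j<N. \<Sum>a<A. Ld j a (gd j a) (dxi m iv \<tau>inv dt gd j a) (deta m iv \<tau>inv ds gd j a))"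

text \<open>mu_a^j = (d^R tau^{-1}_{dt xi})^* D_xi L,  lambda_a^j = (d^R tau^{-1}_{ds eta})^* D_eta L.\<close>
definition dmu :: "('e::euclidean_space \<Rightarrow> 'e \<Rightarrow> 'e) \<Rightarrow> ('e \<Rightarrow> 'e) \<Rightarrow> 'e \<Rightarrow> ('e \<Rightarrow> 'e) \<Rightarrow> ('e \<Rightarrow> 'e) \<Rightarrow>
    (nat \<Rightarrow> nat \<Rightarrow> 'e \<Rightarrow> 'e \<Rightarrow> 'e \<Rightarrow> real) \<Rightarrow> real \<Rightarrow> real \<Rightarrow> (nat \<Rightarrow> nat \<Rightarrow> 'e) \<Rightarrow> nat \<Rightarrow> nat \<Rightarrow> 'e \<Rightarrow> real" where
  "dmu m iv e \<tau> \<tau>inv Ld dt ds gd j a = (\<lambda>\<zeta>.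
     frechet_derivative (\<lambda>y. Ld j a (gd j a) y (deta m iv \<tau>inv ds gd j a))
       (at (dxi m iv \<tau>inv dt gd j a))
       (dRtauinv m e \<tau> \<tau>inv (dt *\<^sub>R dxi m iv \<tau>inv dt gd j a) \<zeta>))"

definition dlam :: "('e::euclidean_space \<Rightarrow> 'e \<Rightarrow> 'e) \<Rightarrow> ('e \<Rightarrow> 'e) \<Rightarrow> 'e \<Rightarrow> ('e \<Rightarrow> 'e) \<Rightarrow> ('e \<Rightarrow> 'e) \<Rightarrow>
    (nat \<Rightarrow> nat \<Rightarrow> 'e \<Rightarrow> 'e \<Rightarrow> 'e \<Rightarrow> real) \<Rightarrow> real \<Rightarrow> real \<Rightarrow> (nat \<Rightarrow> nat \<Rightarrow> 'e) \<Rightarrow> nat \<Rightarrow> nat \<Rightarrow> 'e \<Rightarrow> real" where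
  "dlam m iv e \<tau> \<tau>inv Ld dt ds gd j a = (\<lambda>\<zeta>.
     frechet_derivative (\<lambda>z. Ld j a (gd j a) (dxi m iv \<tau>inv dt gd j a) z)
       (at (deta m iv \<tau>inv ds gd j a))
       (dRtauinv m e \<tau> \<tau>inv (ds *\<^sub>R deta m iv \<tau>inv ds gd j a) \<zeta>))"

text \<open>(g_a^j)^{-1} D_g L_a^j  =  T_e^* L_g (D_g L), as a functional on the Lie algebra.\<close>
definition dDgL :: "('e::euclidean_space \<Rightarrow> 'e \<Rightarrow> 'e) \<Rightarrow> ('e \<Rightarrow> 'e) \<Rightarrow> 'e \<Rightarrow> ('e \<Rightarrow> 'e) \<Rightarrow>
    (nat \<Rightarrow> nat \<Rightarrow> 'e \<Rightarrow> 'e \<Rightarrow> 'e \<Rightarrow> real) \<Rightarrow> real \<Rightarrow> real \<Rightarrow> (nat \<Rightarrow> nat \<Rightarrow> 'e) \<Rightarrow> nat \<Rightarrow> nat \<Rightarrow> 'e \<Rightarrow> real" where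
  "dDgL m iv e \<tau>inv Ld dt ds gd j a = (\<lambda>\<zeta>.
     frechet_derivative (\<lambda>x. Ld j a x (dxi m iv \<tau>inv dt gd j a) (deta m iv \<tau>inv ds gd j a))
       (at (gd j a)) (dLeft m e (gd j a) \<zeta>))"

definition stationary :: "'e::euclidean_space set \<Rightarrow> ((nat \<Rightarrow> nat \<Rightarrow> 'e) \<Rightarrow> real) \<Rightarrow>
    nat \<Rightarrow> nat \<Rightarrow> (nat \<Rightarrow> nat \<Rightarrow> bool) \<Rightarrow> (nat \<Rightarrow> nat \<Rightarrow> 'e) \<Rightarrow> bool" where
  "stationary G S N A fixed gd \<longleftrightarrow>
     (\<forall>(dg :: nat \<Rightarrow> nat \<Rightarrow> 'e) (\<gamma> :: real \<Rightarrow> nat \<Rightarrow> nat \<Rightarrow> 'e).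
        (\<forall>j\<le>N. \<forall>a\<le>A. dg j a \<in> tangent_space G (gd j a)) \<and>
        (\<forall>j\<le>N. \<forall>a\<le>A. fixed j a \<longrightarrow> dg j a = 0) \<and>
        (\<exists>\<epsilon>>0. \<forall>t. \<bar>t\<bar> < \<epsilon> \<longrightarrow> (\<forall>j\<le>N. \<forall>a\<le>A. \<gamma> t j a \<in> G)) \<and>
        (\<forall>j\<le>N. \<forall>a\<le>A. \<gamma> 0 j a = gd j a \<and> ((\<lambda>t. \<gamma> t j a) has_vector_derivative dg j a) (at 0))
        \<longrightarrow> ((\<lambda>t. S (\<gamma> t)) has_real_derivative 0) (at 0))"

definition DCEL :: "'e::euclidean_space set \<Rightarrow> ('e \<Rightarrow> 'e \<Rightarrow> 'e) \<Rightarrow> ('e \<Rightarrow> 'e) \<Rightarrow> 'e \<Rightarrow> ('e \<Rightarrow> 'e) \<Rightarrow> ('e \<Rightarrow> 'e) \<Rightarrow>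
    (nat \<Rightarrow> nat \<Rightarrow> 'e \<Rightarrow> 'e \<Rightarrow> 'e \<Rightarrow> real) \<Rightarrow> real \<Rightarrow> real \<Rightarrow> nat \<Rightarrow> nat \<Rightarrow> (nat \<Rightarrow> nat \<Rightarrow> 'e) \<Rightarrow> bool" where
  "DCEL G m iv e \<tau> \<tau>inv Ld dt ds N A gd \<longleftrightarrow>
     (\<forall>j\<in>{1..N-1}. \<forall>a\<in>{1..A-1}. \<forall>\<zeta>\<in>lie_alg G e.
        (1/dt) * (dmu m iv e \<tau> \<tau>inv Ld dt ds gd j a \<zeta>
                  - Adstar m iv e (\<tau> (dt *\<^sub>R dxi m iv \<tau>inv dt gd (j-1) a))
                      (dmu m iv e \<tau> \<tau>inv Ld dt ds gd (j-1) a) \<zeta>)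
      + (1/ds) * (dlam m iv e \<tau> \<tau>inv Ld dt ds gd j a \<zeta>
                  - Adstar m iv e (\<tau> (ds *\<^sub>R deta m iv \<tau>inv ds gd j (a-1)))
                      (dlam m iv e \<tau> \<tau>inv Ld dt ds gd j (a-1)) \<zeta>)
      = dDgL m iv e \<tau>inv Ld dt ds gd j a \<zeta>)"

definition boundary_B :: "'e::euclidean_space set \<Rightarrow> ('e \<Rightarrow> 'e \<Rightarrow> 'e) \<Rightarrow> ('e \<Rightarrow> 'e) \<Rightarrow> 'e \<Rightarrow> ('e \<Rightarrow> 'e) \<Rightarrow> ('e \<Rightarrow> 'e) \<Rightarrow>
    (nat \<Rightarrow> nat \<Rightarrow> 'e \<Rightarrow> 'e \<Rightarrow> 'e \<Rightarrow> real) \<Rightarrow> real \<Rightarrow> real \<Rightarrow> nat \<Rightarrow> nat \<Rightarrow> (nat \<Rightarrow> nat \<Rightarrow> 'e) \<Rightarrow> bool" where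
  "boundary_B G m iv e \<tau> \<tau>inv Ld dt ds N A gd \<longleftrightarrow>
     (\<forall>j\<in>{1..N-1}. \<forall>\<zeta>\<in>lie_alg G e.
        (1/dt) * (dmu m iv e \<tau> \<tau>inv Ld dt ds gd j 0 \<zeta>
                  - Adstar m iv e (\<tau> (dt *\<^sub>R dxi m iv \<tau>inv dt gd (j-1) 0))
                      (dmu m iv e \<tau> \<tau>inv Ld dt ds gd (j-1) 0) \<zeta>)
      + (1/ds) * dlam m iv e \<tau> \<tau>inv Ld dt ds gd j 0 \<zeta>
      = dDgL m iv e \<tau>inv Ld dt ds gd j 0 \<zeta>
      \<and> (1/ds) * Adstar m iv e (\<tau> (ds *\<^sub>R deta m iv \<tau>inv ds gd j (A-1)))
                    (dlam m iv e \<tau> \<tau>inv Ld dt ds gd j (A-1)) \<zeta> = 0)"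

definition boundary_C :: "'e::euclidean_space set \<Rightarrow> ('e \<Rightarrow> 'e \<Rightarrow> 'e) \<Rightarrow> ('e \<Rightarrow> 'e) \<Rightarrow> 'e \<Rightarrow> ('e \<Rightarrow> 'e) \<Rightarrow> ('e \<Rightarrow> 'e) \<Rightarrow>
    (nat \<Rightarrow> nat \<Rightarrow> 'e \<Rightarrow> 'e \<Rightarrow> 'e \<Rightarrow> real) \<Rightarrow> real \<Rightarrow> real \<Rightarrow> nat \<Rightarrow> nat \<Rightarrow> (nat \<Rightarrow> nat \<Rightarrow> 'e) \<Rightarrow> bool" where
  "boundary_C G m iv e \<tau> \<tau>inv Ld dt ds N A gd \<longleftrightarrow>
     (\<forall>a\<in>{1..A-1}. \<forall>\<zeta>\<in>lie_alg G e.
        (1/dt) * dmu m iv e \<tau> \<tau>inv Ld dt ds gd 0 a \<zeta>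
      + (1/ds) * (dlam m iv e \<tau> \<tau>inv Ld dt ds gd 0 a \<zeta>
                  - Adstar m iv e (\<tau> (ds *\<^sub>R deta m iv \<tau>inv ds gd 0 (a-1)))
                      (dlam m iv e \<tau> \<tau>inv Ld dt ds gd 0 (a-1)) \<zeta>)
      = dDgL m iv e \<tau>inv Ld dt ds gd 0 a \<zeta>
      \<and> (1/dt) * Adstar m iv e (\<tau> (dt *\<^sub>R dxi m iv \<tau>inv dt gd (N-1) a))
                    (dmu m iv e \<tau> \<tau>inv Ld dt ds gd (N-1) a) \<zeta> = 0)"

end

theory Submission
  imports Defs
begin

lemma smooth_diff: "smooth_on S f \<Longrightarrow> x \<in> S \<Longrightarrow> f differentiable (at x)"
proof -
  assume s: "smooth_on S f" and x: "x \<in> S"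
  then obtain F where F: "\<forall>x\<in>S. F [] x = f x" "\<forall>vs. \<forall>x\<in>S. (F vs has_derivative (\<lambda>v. F (v # vs) x)) (at x)"
    and o: "open S" unfolding smooth_on_def by blast
  have "(F [] has_derivative (\<lambda>v. F [v] x)) (at x)" using F(2) x by blast
  then have "(f has_derivative (\<lambda>v. F [v] x)) (at x)"
    by (rule has_derivative_transform_within_open[OF _ o x]) (use F(1) in auto)
  then show ?thesis unfolding differentiable_def by blast
qed

lemma curve_chain:
  assumes "f differentiable (at x)" "(c has_vector_derivative v) (at 0)" "c 0 = x"
  shows "((\<lambda>t. f (c t)) has_vector_derivative frechet_derivative f (at x) v) (at 0)"
proof -
  have "(f has_derivative frechet_derivative f (at x)) (at x)"
    using assms(1) frechet_derivative_works by blast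
  then have "(f has_derivative frechet_derivative f (at x)) (at (c 0) within range c)"
    using assms(3) has_derivative_at_withinI by blast
  from vector_derivative_diff_chain_within[of c v 0 UNIV, OF _ this] assms(2)
  show ?thesis by (simp add: o_def)
qed

lemma curve_near:
  assumes "(f has_vector_derivative v) (at 0)" "\<epsilon> > 0" "\<forall>t. \<bar>t\<bar> < \<epsilon> \<longrightarrow> f t = g t"
  shows "(g has_vector_derivative v) (at (0::real))"
  by (rule has_vector_derivative_transform_within_open[OF assms(1), of "ball 0 \<epsilon>"])
     (use assms in \<open>auto simp: dist_real_def\<close>)

lemma fd_linear: "f differentiable (at x) \<Longrightarrow> linear (frechet_derivative f (at x))"
  using frechet_derivative_works has_derivative_linear by blast

lemma tangent_scale:
  assumes "v \<in> tangent_space G p" "r > 0"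
  shows "r *\<^sub>R v \<in> tangent_space G p"
proof -
  obtain \<gamma> \<epsilon> where g: "\<epsilon> > 0" "\<gamma> 0 = p" "\<forall>t. \<bar>t\<bar> < \<epsilon> \<longrightarrow> \<gamma> t \<in> G" "(\<gamma> has_vector_derivative v) (at 0)"
    using assms(1) unfolding tangent_space_def by blast
  have "((\<lambda>t. \<gamma> (r * t)) has_vector_derivative r *\<^sub>R v) (at 0)"
  proof -
    have "((\<lambda>t. r * t) has_vector_derivative r) (at (0::real))"
      by (auto intro!: derivative_eq_intros)
    from vector_derivative_diff_chain_within[OF this, of \<gamma> "\<lambda>x. x *\<^sub>R v"] g(4)
    show ?thesis unfolding has_vector_derivative_def
      by (simp add: o_def has_derivative_at_withinI)
  qed
  moreover have "\<forall>t. \<bar>t\<bar> < \<epsilon> / r \<longrightarrow> \<gamma> (r * t) \<in> G"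
  proof (intro allI impI)
    fix t assume "\<bar>t\<bar> < \<epsilon> / r"
    then have "\<bar>r * t\<bar> < \<epsilon>" using assms(2) by (simp add: abs_mult field_simps)
    then show "\<gamma> (r * t) \<in> G" using g(3) by blast
  qed
  ultimately show ?thesis unfolding tangent_space_def using g assms(2)
    by (intro CollectI exI[of _ "\<lambda>t. \<gamma> (r * t)"] exI[of _ "\<epsilon> / r"]) auto
qed

locale LG =
  fixes G :: "'e::euclidean_space set" and m :: "'e \<Rightarrow> 'e \<Rightarrow> 'e" and iv :: "'e \<Rightarrow> 'e" and e :: 'e
  assumes lg: "lie_group G m iv e"
begin

lemma e_in[simp]: "e \<in> G" using lg unfolding lie_group_def by blast
lemma m_in[simp]: "x \<in> G \<Longrightarrow> y \<in> G \<Longrightarrow> m x y \<in> G" using lg unfolding lie_group_def by blast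
lemma iv_in[simp]: "x \<in> G \<Longrightarrow> iv x \<in> G" using lg unfolding lie_group_def by blast
lemma assoc[simp]: "x \<in> G \<Longrightarrow> y \<in> G \<Longrightarrow> z \<in> G \<Longrightarrow> m (m x y) z = m x (m y z)"
  using lg unfolding lie_group_def by blast
lemma lid[simp]: "x \<in> G \<Longrightarrow> m e x = x" using lg unfolding lie_group_def by blast
lemma rid[simp]: "x \<in> G \<Longrightarrow> m x e = x" using lg unfolding lie_group_def by blast
lemma linv[simp]: "x \<in> G \<Longrightarrow> m (iv x) x = e" using lg unfolding lie_group_def by blast
lemma rinv[simp]: "x \<in> G \<Longrightarrow> m x (iv x) = e" using lg unfolding lie_group_def by blast
lemma linv2[simp]: "x \<in> G \<Longrightarrow> y \<in> G \<Longrightarrow> m (iv x) (m x y) = y"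
  by (metis assoc iv_in lid linv)
lemma rinv2[simp]: "x \<in> G \<Longrightarrow> y \<in> G \<Longrightarrow> m x (m (iv x) y) = y"
  by (metis assoc iv_in lid rinv)

lemma mm_diff: "x \<in> G \<Longrightarrow> y \<in> G \<Longrightarrow> (\<lambda>(x, y). m x y) differentiable (at (x, y))"
proof -
  assume "x \<in> G" "y \<in> G"
  obtain W where "G \<times> G \<subseteq> W" "smooth_on W (\<lambda>(x, y). m x y)" using lg unfolding lie_group_def by blast
  then show ?thesis using smooth_diff \<open>x \<in> G\<close> \<open>y \<in> G\<close> by blast
qed

lemma iv_diff: "x \<in> G \<Longrightarrow> iv differentiable (at x)"
proof -
  assume "x \<in> G"
  obtain W where "G \<subseteq> W" "smooth_on W iv" using lg unfolding lie_group_def by blast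
  then show ?thesis using smooth_diff \<open>x \<in> G\<close> by blast
qed

lemma mL_diff: "x \<in> G \<Longrightarrow> y \<in> G \<Longrightarrow> m x differentiable (at y)"
proof -
  assume a: "x \<in> G" "y \<in> G"
  have "(\<lambda>z. (x, z)) differentiable (at y)" by (auto intro!: derivative_intros)
  from differentiable_chain_at[OF this, of "\<lambda>(x, y). m x y"] mm_diff[OF a]
  show ?thesis by (simp add: o_def)
qed

lemma mR_diff: "x \<in> G \<Longrightarrow> y \<in> G \<Longrightarrow> (\<lambda>z. m z y) differentiable (at x)"
proof -
  assume a: "x \<in> G" "y \<in> G"
  have "(\<lambda>z. (z, y)) differentiable (at x)" by (auto intro!: derivative_intros)
  from differentiable_chain_at[OF this, of "\<lambda>(x, y). m x y"] mm_diff[OF a]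
  show ?thesis by (simp add: o_def)
qed

lemma prod_rule:
  assumes x: "x \<in> G" and y: "y \<in> G"
    and a: "(\<alpha> has_vector_derivative u) (at 0)" "\<alpha> 0 = x"
    and b: "(\<beta> has_vector_derivative v) (at 0)" "\<beta> 0 = y"
  shows "((\<lambda>t. m (\<alpha> t) (\<beta> t)) has_vector_derivative
           frechet_derivative (\<lambda>z. m z y) (at x) u + frechet_derivative (m x) (at y) v) (at 0)"
proof -
  define M where "M = frechet_derivative (\<lambda>(x, y). m x y) (at (x, y))"
  have D: "((\<lambda>(x, y). m x y) has_derivative M) (at (x, y))"
    unfolding M_def using mm_diff[OF x y] frechet_derivative_works by blast
  have lin: "linear M" using D has_derivative_linear by blast
  have c: "((\<lambda>t. (\<alpha> t, \<beta> t)) has_vector_derivative (u, v)) (at 0)"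
    using a b by (intro has_vector_derivative_Pair)
  have "((\<lambda>t. (\<lambda>(x, y). m x y) (\<alpha> t, \<beta> t)) has_vector_derivative M (u, v)) (at 0)"
    using curve_chain[OF mm_diff[OF x y] c] a b unfolding M_def by simp
  then have 1: "((\<lambda>t. m (\<alpha> t) (\<beta> t)) has_vector_derivative M (u, 0) + M (0, v)) (at 0)"
    using linear_add[OF lin, of "(u,0)" "(0,v)"] by simp
  have "((\<lambda>z. (\<lambda>(x, y). m x y) (z, y)) has_derivative (\<lambda>w. M (w, 0))) (at x)"
  proof -
    have "((\<lambda>z. (z, y)) has_derivative (\<lambda>w. (w, 0))) (at x)" by (auto intro!: derivative_eq_intros)
    from has_derivative_compose[OF this D] show ?thesis by simp
  qed
  then have 2: "(\<lambda>w. M (w, 0)) = frechet_derivative (\<lambda>z. m z y) (at x)"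
    using frechet_derivative_at by fastforce
  have "((\<lambda>z. (\<lambda>(x, y). m x y) (x, z)) has_derivative (\<lambda>w. M (0, w))) (at y)"
  proof -
    have "((\<lambda>z. (x, z)) has_derivative (\<lambda>w. (0, w))) (at y)" by (auto intro!: derivative_eq_intros)
    from has_derivative_compose[OF this D] show ?thesis by simp
  qed
  then have 3: "(\<lambda>w. M (0, w)) = frechet_derivative (m x) (at y)"
    using frechet_derivative_at by fastforce
  show ?thesis using 1 2 3 by metis
qed

end

context LG begin

definition Gcurve :: "(real \<Rightarrow> 'e) \<Rightarrow> 'e \<Rightarrow> 'e \<Rightarrow> bool" where
  "Gcurve c x v \<longleftrightarrow> (\<exists>\<epsilon>>0. (\<forall>t. \<bar>t\<bar> < \<epsilon> \<longrightarrow> c t \<in> G)) \<and> c 0 = x \<and> (c has_vector_derivative v) (at 0)"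

lemma gc_tangent: "Gcurve c x v \<Longrightarrow> v \<in> tangent_space G x"
  unfolding Gcurve_def tangent_space_def by blast

lemma tangent_gc: "v \<in> tangent_space G x \<Longrightarrow> \<exists>c. Gcurve c x v"
  unfolding Gcurve_def tangent_space_def by blast

lemma gc_in: "Gcurve c x v \<Longrightarrow> x \<in> G"
  unfolding Gcurve_def by force

lemma gc_near2:
  assumes "Gcurve c x v" "Gcurve d y w"
  obtains \<epsilon> where "\<epsilon> > 0" "\<forall>t. \<bar>t\<bar> < \<epsilon> \<longrightarrow> c t \<in> G \<and> d t \<in> G"
proof -
  obtain \<epsilon>1 \<epsilon>2 where "\<epsilon>1 > 0" "\<forall>t. \<bar>t\<bar> < \<epsilon>1 \<longrightarrow> c t \<in> G" "\<epsilon>2 > 0" "\<forall>t. \<bar>t\<bar> < \<epsilon>2 \<longrightarrow> d t \<in> G"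
    using assms unfolding Gcurve_def by blast
  then show ?thesis using that[of "min \<epsilon>1 \<epsilon>2"] by auto
qed

lemma id_e:
  assumes "Gcurve c e v"
  shows "frechet_derivative (\<lambda>z. m z e) (at e) v = v" "frechet_derivative (m e) (at e) v = v"
proof -
  obtain \<epsilon> where c: "\<epsilon> > 0" "\<forall>t. \<bar>t\<bar> < \<epsilon> \<longrightarrow> c t \<in> G" "c 0 = e" "(c has_vector_derivative v) (at 0)"
    using assms unfolding Gcurve_def by blast
  have "((\<lambda>t. m (c t) e) has_vector_derivative frechet_derivative (\<lambda>z. m z e) (at e) v) (at 0)"
    using curve_chain[OF mR_diff[OF e_in e_in] c(4) c(3)] .
  then have "(c has_vector_derivative frechet_derivative (\<lambda>z. m z e) (at e) v) (at 0)"
    by (rule curve_near[OF _ c(1)]) (use c(2) in auto)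
  then show "frechet_derivative (\<lambda>z. m z e) (at e) v = v" using c(4) vector_derivative_unique_at by blast
  have "((\<lambda>t. m e (c t)) has_vector_derivative frechet_derivative (m e) (at e) v) (at 0)"
    using curve_chain[OF mL_diff[OF e_in e_in] c(4) c(3)] .
  then have "(c has_vector_derivative frechet_derivative (m e) (at e) v) (at 0)"
    by (rule curve_near[OF _ c(1)]) (use c(2) in auto)
  then show "frechet_derivative (m e) (at e) v = v" using c(4) vector_derivative_unique_at by blast
qed

lemma gc_left:
  assumes "x \<in> G" "Gcurve c e v"
  shows "Gcurve (\<lambda>t. m x (c t)) x (dLeft m e x v)"
proof -
  obtain \<epsilon> where c: "\<epsilon> > 0" "\<forall>t. \<bar>t\<bar> < \<epsilon> \<longrightarrow> c t \<in> G" "c 0 = e" "(c has_vector_derivative v) (at 0)"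
    using assms unfolding Gcurve_def by blast
  show ?thesis unfolding Gcurve_def dLeft_def
    using curve_chain[OF mL_diff[OF assms(1) e_in] c(4) c(3)] c assms(1) by auto
qed

definition zeta :: "'e \<Rightarrow> 'e \<Rightarrow> 'e" where
  "zeta g w = frechet_derivative (m (iv g)) (at g) w"

lemma gc_trans:
  assumes "Gcurve \<gamma> g w"
  shows "Gcurve (\<lambda>t. m (iv g) (\<gamma> t)) e (zeta g w)" "w = dLeft m e g (zeta g w)"
proof -
  obtain \<epsilon> where c: "\<epsilon> > 0" "\<forall>t. \<bar>t\<bar> < \<epsilon> \<longrightarrow> \<gamma> t \<in> G" "\<gamma> 0 = g" "(\<gamma> has_vector_derivative w) (at 0)"
    using assms unfolding Gcurve_def by blast
  have g: "g \<in> G" using c by force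
  show gc: "Gcurve (\<lambda>t. m (iv g) (\<gamma> t)) e (zeta g w)" unfolding Gcurve_def zeta_def
    using curve_chain[OF mL_diff[OF iv_in[OF g] g] c(4) c(3)] c g by auto
  have "((\<lambda>t. m g (m (iv g) (\<gamma> t))) has_vector_derivative dLeft m e g (zeta g w)) (at 0)"
    unfolding dLeft_def using curve_chain[OF mL_diff[OF g e_in], of "\<lambda>t. m (iv g) (\<gamma> t)"] gc
    unfolding Gcurve_def by auto
  then have "(\<gamma> has_vector_derivative dLeft m e g (zeta g w)) (at 0)"
    by (rule curve_near[OF _ c(1)]) (use c(2) g in auto)
  then show "w = dLeft m e g (zeta g w)" using c(4) vector_derivative_unique_at by blast
qed

lemma gc_Ad:
  assumes "h \<in> G" "Gcurve b e v"
  shows "Gcurve (\<lambda>t. m (m h (b t)) (iv h)) e (Ad m iv e h v)"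
proof -
  obtain \<epsilon> where c: "\<epsilon> > 0" "\<forall>t. \<bar>t\<bar> < \<epsilon> \<longrightarrow> b t \<in> G" "b 0 = e" "(b has_vector_derivative v) (at 0)"
    using assms unfolding Gcurve_def by blast
  have "((\<lambda>z. m z (iv h)) \<circ> m h) differentiable (at e)"
    by (rule differentiable_chain_at[OF mL_diff[OF assms(1) e_in]]) (use mR_diff assms in auto)
  then have d: "(\<lambda>x. m (m h x) (iv h)) differentiable (at e)" by (simp add: o_def)
  show ?thesis unfolding Gcurve_def Ad_def
    using curve_chain[OF d c(4) c(3)] c assms(1) by auto
qed

lemma gc_inv:
  assumes "Gcurve \<gamma> g w"
  shows "Gcurve (\<lambda>t. m (iv (\<gamma> t)) g) e (- zeta g w)"
proof -
  obtain \<epsilon> where c: "\<epsilon> > 0" "\<forall>t. \<bar>t\<bar> < \<epsilon> \<longrightarrow> \<gamma> t \<in> G" "\<gamma> 0 = g" "(\<gamma> has_vector_derivative w) (at 0)"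
    using assms unfolding Gcurve_def by blast
  have g: "g \<in> G" using c by force
  have "((\<lambda>z. m z g) \<circ> iv) differentiable (at g)"
    by (rule differentiable_chain_at[OF iv_diff[OF g]]) (use mR_diff g in auto)
  then have d: "(\<lambda>x. m (iv x) g) differentiable (at g)" by (simp add: o_def)
  define a where "a = frechet_derivative (\<lambda>x. m (iv x) g) (at g) w"
  have ga: "Gcurve (\<lambda>t. m (iv (\<gamma> t)) g) e a" unfolding Gcurve_def a_def
    using curve_chain[OF d c(4) c(3)] c g by auto
  have gb: "Gcurve (\<lambda>t. m (iv g) (\<gamma> t)) e (zeta g w)" using gc_trans[OF assms] by blast
  have "((\<lambda>t. m (m (iv (\<gamma> t)) g) (m (iv g) (\<gamma> t))) has_vector_derivative
     frechet_derivative (\<lambda>z. m z e) (at e) a + frechet_derivative (m e) (at e) (zeta g w)) (at 0)"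
    by (rule prod_rule) (use ga gb in \<open>auto simp: Gcurve_def\<close>)
  then have "((\<lambda>t. m (m (iv (\<gamma> t)) g) (m (iv g) (\<gamma> t))) has_vector_derivative a + zeta g w) (at 0)"
    using id_e ga gb by simp
  then have "((\<lambda>t. e) has_vector_derivative a + zeta g w) (at 0)"
    by (rule curve_near[OF _ c(1)]) (use c(2) g in auto)
  moreover have "((\<lambda>t. e) has_vector_derivative 0) (at 0)" by (rule has_vector_derivative_const)
  ultimately have "a + zeta g w = 0" using vector_derivative_unique_at by blast
  then have "a = - zeta g w" by (simp add: eq_neg_iff_add_eq_0)
  then show ?thesis using ga by simp
qed

lemma quot_deriv:
  assumes "Gcurve \<gamma> g w" "Gcurve \<gamma>' g' w'"
  shows "((\<lambda>t. m (iv (\<gamma> t)) (\<gamma>' t)) has_vector_derivative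
           dRight m e (m (iv g) g') (Ad m iv e (m (iv g) g') (zeta g' w') - zeta g w)) (at 0)"
proof -
  have g: "g \<in> G" and g': "g' \<in> G" using assms gc_in by auto
  define h where "h = m (iv g) g'"
  have h: "h \<in> G" unfolding h_def using g g' by simp
  have ga: "Gcurve (\<lambda>t. m (iv (\<gamma> t)) g) e (- zeta g w)" using gc_inv[OF assms(1)] .
  have gd: "Gcurve (\<lambda>t. m (m h (m (iv g') (\<gamma>' t))) (iv h)) e (Ad m iv e h (zeta g' w'))"
    using gc_Ad[OF h gc_trans(1)[OF assms(2)]] .
  have "((\<lambda>t. m (m (iv (\<gamma> t)) g) (m (m h (m (iv g') (\<gamma>' t))) (iv h))) has_vector_derivative
     frechet_derivative (\<lambda>z. m z e) (at e) (- zeta g w) + frechet_derivative (m e) (at e) (Ad m iv e h (zeta g' w'))) (at 0)"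
    by (rule prod_rule) (use ga gd in \<open>auto simp: Gcurve_def\<close>)
  then have pd: "((\<lambda>t. m (m (iv (\<gamma> t)) g) (m (m h (m (iv g') (\<gamma>' t))) (iv h))) has_vector_derivative
     Ad m iv e h (zeta g' w') - zeta g w) (at 0)"
    using id_e ga gd by simp
  have D: "((\<lambda>t. m (m (m (iv (\<gamma> t)) g) (m (m h (m (iv g') (\<gamma>' t))) (iv h))) h) has_vector_derivative
     frechet_derivative (\<lambda>z. m z h) (at e) (Ad m iv e h (zeta g' w') - zeta g w)) (at 0)"
    by (rule curve_chain[OF mR_diff[OF e_in h] pd]) (use g g' h assms in \<open>simp add: Gcurve_def\<close>)
  obtain \<epsilon> where ep: "\<epsilon> > 0" "\<forall>t. \<bar>t\<bar> < \<epsilon> \<longrightarrow> \<gamma> t \<in> G \<and> \<gamma>' t \<in> G"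
    using gc_near2[OF assms] .
  have "((\<lambda>t. m (iv (\<gamma> t)) (\<gamma>' t)) has_vector_derivative
     frechet_derivative (\<lambda>z. m z h) (at e) (Ad m iv e h (zeta g' w') - zeta g w)) (at 0)"
    by (rule curve_near[OF D ep(1)]) (use g g' h ep(2) in \<open>auto simp: h_def\<close>)
  then show ?thesis unfolding dRight_def h_def .
qed

end

lemma triple_split:
  fixes L :: "('a::real_normed_vector \<times> 'b::real_normed_vector \<times> 'c::real_normed_vector) \<Rightarrow> real"
  assumes "L differentiable (at (x, y, z))"
  shows "frechet_derivative L (at (x, y, z)) (u, v, w) =
     frechet_derivative (\<lambda>x. L (x, y, z)) (at x) u + frechet_derivative (\<lambda>y. L (x, y, z)) (at y) v
     + frechet_derivative (\<lambda>z. L (x, y, z)) (at z) w"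
proof -
  define M where "M = frechet_derivative L (at (x, y, z))"
  have D: "(L has_derivative M) (at (x, y, z))"
    unfolding M_def using assms frechet_derivative_works by blast
  have lin: "linear M" using D has_derivative_linear by blast
  have "M (u, v, w) = M (u, 0, 0) + M (0, v, 0) + M (0, 0, w)"
    using linear_add[OF lin, of "(u,0,0)" "(0,v,0)"] linear_add[OF lin, of "(u,v,0)" "(0,0,w)"] by simp
  moreover have "(\<lambda>a. M (a, 0, 0)) = frechet_derivative (\<lambda>x. L (x, y, z)) (at x)"
  proof -
    have "((\<lambda>a. (a, y, z)) has_derivative (\<lambda>a. (a, 0, 0))) (at x)" by (auto intro!: derivative_eq_intros simp: zero_prod_def)
    from has_derivative_compose[OF this D] show ?thesis using frechet_derivative_at by fastforce
  qed
  moreover have "(\<lambda>a. M (0, a, 0)) = frechet_derivative (\<lambda>y. L (x, y, z)) (at y)"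
  proof -
    have "((\<lambda>a. (x, a, z)) has_derivative (\<lambda>a. (0, a, 0))) (at y)" by (auto intro!: derivative_eq_intros simp: zero_prod_def)
    from has_derivative_compose[OF this D] show ?thesis using frechet_derivative_at by fastforce
  qed
  moreover have "(\<lambda>a. M (0, 0, a)) = frechet_derivative (\<lambda>z. L (x, y, z)) (at z)"
  proof -
    have "((\<lambda>a. (x, y, a)) has_derivative (\<lambda>a. (0, 0, a))) (at z)" by (auto intro!: derivative_eq_intros simp: zero_prod_def)
    from has_derivative_compose[OF this D] show ?thesis using frechet_derivative_at by fastforce
  qed
  ultimately show ?thesis unfolding M_def by metis
qed

lemma triple_diff_parts:
  fixes L :: "('a::real_normed_vector \<times> 'b::real_normed_vector \<times> 'c::real_normed_vector) \<Rightarrow> real"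
  assumes "L differentiable (at (x, y, z))"
  shows "(\<lambda>x. L (x, y, z)) differentiable (at x)" "(\<lambda>y. L (x, y, z)) differentiable (at y)"
        "(\<lambda>z. L (x, y, z)) differentiable (at z)"
proof -
  have "(\<lambda>a. (a, y, z)) differentiable (at x)" by (auto intro!: derivative_intros)
  from differentiable_chain_at[OF this, of L] assms show "(\<lambda>x. L (x, y, z)) differentiable (at x)" by (simp add: o_def)
  have "(\<lambda>a. (x, a, z)) differentiable (at y)" by (auto intro!: derivative_intros)
  from differentiable_chain_at[OF this, of L] assms show "(\<lambda>y. L (x, y, z)) differentiable (at y)" by (simp add: o_def)
  have "(\<lambda>a. (x, y, a)) differentiable (at z)" by (auto intro!: derivative_intros)
  from differentiable_chain_at[OF this, of L] assms show "(\<lambda>z. L (x, y, z)) differentiable (at z)" by (simp add: o_def)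
qed

locale ST = LG G m iv e
  for G :: "'e::euclidean_space set" and m iv e +
  fixes \<tau> \<tau>inv :: "'e \<Rightarrow> 'e" and U V :: "'e set"
    and Ld :: "nat \<Rightarrow> nat \<Rightarrow> 'e \<Rightarrow> 'e \<Rightarrow> 'e \<Rightarrow> real"
    and dt ds :: real and N A :: nat
    and gd :: "nat \<Rightarrow> nat \<Rightarrow> 'e"
  assumes tc: "tau_chart G e \<tau> \<tau>inv U V"
    and dt: "dt > 0" and ds: "ds > 0"
    and Lsm: "\<forall>j<N. \<forall>a<A. \<exists>W. G \<times> lie_alg G e \<times> lie_alg G e \<subseteq> W \<and>
                         smooth_on W (\<lambda>(x, y, z). Ld j a x y z)"
    and gdG: "\<forall>j\<le>N. \<forall>a\<le>A. gd j a \<in> G"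
    and gdV: "\<forall>j<N. \<forall>a<A. m (iv (gd j a)) (gd (Suc j) a) \<in> V \<and> m (iv (gd j a)) (gd j (Suc a)) \<in> V"
begin

lemma tinv_diff: "h \<in> V \<Longrightarrow> \<tau>inv differentiable (at h)"
  using tc smooth_diff unfolding tau_chart_def by blast

lemma tinv_props: "h \<in> G \<Longrightarrow> h \<in> V \<Longrightarrow> \<tau>inv h \<in> lie_alg G e \<and> \<tau> (\<tau>inv h) = h"
  using tc unfolding tau_chart_def by blast

abbreviation "XI \<equiv> dxi m iv \<tau>inv dt"
abbreviation "ETA \<equiv> deta m iv \<tau>inv ds"
abbreviation "MU \<equiv> dmu m iv e \<tau> \<tau>inv Ld dt ds gd"
abbreviation "LAM \<equiv> dlam m iv e \<tau> \<tau>inv Ld dt ds gd"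
abbreviation "DG \<equiv> dDgL m iv e \<tau>inv Ld dt ds gd"

lemma gd_in: "j \<le> N \<Longrightarrow> a \<le> A \<Longrightarrow> gd j a \<in> G" using gdG by blast

lemma xi_props:
  assumes "j < N" "a < A"
  shows "XI gd j a \<in> lie_alg G e" "\<tau> (dt *\<^sub>R XI gd j a) = m (iv (gd j a)) (gd (Suc j) a)"
proof -
  let ?h = "m (iv (gd j a)) (gd (Suc j) a)"
  have hG: "?h \<in> G" using assms gd_in by simp
  have hV: "?h \<in> V" using assms gdV by blast
  show "XI gd j a \<in> lie_alg G e" unfolding dxi_def lie_alg_def
    using tangent_scale[of "\<tau>inv ?h" G e "1/dt"] tinv_props[OF hG hV] dt unfolding lie_alg_def by simp
  show "\<tau> (dt *\<^sub>R XI gd j a) = ?h" unfolding dxi_def using dt tinv_props[OF hG hV] by simp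
qed

lemma eta_props:
  assumes "j < N" "a < A"
  shows "ETA gd j a \<in> lie_alg G e" "\<tau> (ds *\<^sub>R ETA gd j a) = m (iv (gd j a)) (gd j (Suc a))"
proof -
  let ?h = "m (iv (gd j a)) (gd j (Suc a))"
  have hG: "?h \<in> G" using assms gd_in by simp
  have hV: "?h \<in> V" using assms gdV by blast
  show "ETA gd j a \<in> lie_alg G e" unfolding deta_def lie_alg_def
    using tangent_scale[of "\<tau>inv ?h" G e "1/ds"] tinv_props[OF hG hV] ds unfolding lie_alg_def by simp
  show "\<tau> (ds *\<^sub>R ETA gd j a) = ?h" unfolding deta_def using ds tinv_props[OF hG hV] by simp
qed

lemma L_diff:
  assumes "j < N" "a < A"
  shows "(\<lambda>(x, y, z). Ld j a x y z) differentiable (at (gd j a, XI gd j a, ETA gd j a))"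
proof -
  obtain W where "G \<times> lie_alg G e \<times> lie_alg G e \<subseteq> W" "smooth_on W (\<lambda>(x, y, z). Ld j a x y z)"
    using Lsm assms by blast
  moreover have "(gd j a, XI gd j a, ETA gd j a) \<in> G \<times> lie_alg G e \<times> lie_alg G e"
    using xi_props eta_props gd_in assms by auto
  ultimately show ?thesis using smooth_diff by blast
qed

lemma dRight_lin: "h \<in> G \<Longrightarrow> linear (dRight m e h)"
proof -
  assume h: "h \<in> G"
  have "dRight m e h = frechet_derivative (\<lambda>z. m z h) (at e)" by (rule ext) (simp add: dRight_def)
  then show ?thesis using fd_linear[OF mR_diff[OF e_in h]] by simp
qed

lemma Ad_lin: "h \<in> G \<Longrightarrow> linear (Ad m iv e h)"
proof -
  assume h: "h \<in> G"
  have "((\<lambda>z. m z (iv h)) \<circ> m h) differentiable (at e)"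
    by (rule differentiable_chain_at[OF mL_diff[OF h e_in]]) (use mR_diff h in auto)
  then have d: "(\<lambda>x. m (m h x) (iv h)) differentiable (at e)" by (simp add: o_def)
  have "Ad m iv e h = frechet_derivative (\<lambda>x. m (m h x) (iv h)) (at e)" by (rule ext) (simp add: Ad_def)
  then show ?thesis using fd_linear[OF d] by simp
qed

lemma mu_lin: assumes "j < N" "a < A" shows "linear (MU j a)"
proof -
  let ?h = "m (iv (gd j a)) (gd (Suc j) a)"
  have hG: "?h \<in> G" using assms gd_in by simp
  have hV: "?h \<in> V" using assms gdV by blast
  have l1: "linear (frechet_derivative (\<lambda>y. Ld j a (gd j a) y (ETA gd j a)) (at (XI gd j a)))"
    using fd_linear triple_diff_parts(2)[OF L_diff[OF assms]] by simp
  have l2: "linear (frechet_derivative \<tau>inv (at ?h))" using fd_linear tinv_diff hV by blast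
  have "MU j a = frechet_derivative (\<lambda>y. Ld j a (gd j a) y (ETA gd j a)) (at (XI gd j a))
      \<circ> frechet_derivative \<tau>inv (at ?h) \<circ> dRight m e ?h"
    unfolding dmu_def dRtauinv_def xi_props(2)[OF assms] by (simp add: o_def)
  then show ?thesis using l1 l2 dRight_lin[OF hG] by (simp add: linear_compose)
qed

lemma lam_lin: assumes "j < N" "a < A" shows "linear (LAM j a)"
proof -
  let ?h = "m (iv (gd j a)) (gd j (Suc a))"
  have hG: "?h \<in> G" using assms gd_in by simp
  have hV: "?h \<in> V" using assms gdV by blast
  have l1: "linear (frechet_derivative (\<lambda>z. Ld j a (gd j a) (XI gd j a) z) (at (ETA gd j a)))"
    using fd_linear triple_diff_parts(3)[OF L_diff[OF assms]] by simp
  have l2: "linear (frechet_derivative \<tau>inv (at ?h))" using fd_linear tinv_diff hV by blast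
  have "LAM j a = frechet_derivative (\<lambda>z. Ld j a (gd j a) (XI gd j a) z) (at (ETA gd j a))
      \<circ> frechet_derivative \<tau>inv (at ?h) \<circ> dRight m e ?h"
    unfolding dlam_def dRtauinv_def eta_props(2)[OF assms] by (simp add: o_def)
  then show ?thesis using l1 l2 dRight_lin[OF hG] by (simp add: linear_compose)
qed

lemma DG_lin: assumes "j < N" "a < A" shows "linear (DG j a)"
proof -
  have l1: "linear (frechet_derivative (\<lambda>x. Ld j a x (XI gd j a) (ETA gd j a)) (at (gd j a)))"
    using fd_linear triple_diff_parts(1)[OF L_diff[OF assms]] by simp
  have "dLeft m e (gd j a) = frechet_derivative (m (gd j a)) (at e)" by (rule ext) (simp add: dLeft_def)
  then have l2: "linear (dLeft m e (gd j a))"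
    using fd_linear[OF mL_diff[OF gd_in e_in]] assms by simp
  have "DG j a = frechet_derivative (\<lambda>x. Ld j a x (XI gd j a) (ETA gd j a)) (at (gd j a)) \<circ> dLeft m e (gd j a)"
    unfolding dDgL_def by (simp add: o_def)
  then show ?thesis using l1 l2 by (simp add: linear_compose)
qed

end

lemma hvd_scale: "(f has_vector_derivative f') (at x) \<Longrightarrow> ((\<lambda>t. c *\<^sub>R f t) has_vector_derivative c *\<^sub>R f') (at x)"
  using has_vector_derivative_scaleR[of "\<lambda>_. c" 0 x UNIV f f'] by simp

context ST begin

lemma xi_deriv:
  assumes "j < N" "a < A"
    and c1: "Gcurve (\<lambda>t. \<gamma> t j a) (gd j a) w" and c2: "Gcurve (\<lambda>t. \<gamma> t (Suc j) a) (gd (Suc j) a) w'"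
  shows "((\<lambda>t. XI (\<gamma> t) j a) has_vector_derivative (1/dt) *\<^sub>R dRtauinv m e \<tau> \<tau>inv (dt *\<^sub>R XI gd j a)
           (Ad m iv e (\<tau> (dt *\<^sub>R XI gd j a)) (zeta (gd (Suc j) a) w') - zeta (gd j a) w)) (at 0)"
proof -
  let ?h = "m (iv (gd j a)) (gd (Suc j) a)"
  have hV: "?h \<in> V" using assms gdV by blast
  have q: "((\<lambda>t. m (iv (\<gamma> t j a)) (\<gamma> t (Suc j) a)) has_vector_derivative
     dRight m e ?h (Ad m iv e ?h (zeta (gd (Suc j) a) w') - zeta (gd j a) w)) (at 0)"
    using quot_deriv[OF c1 c2] .
  have "((\<lambda>t. \<tau>inv (m (iv (\<gamma> t j a)) (\<gamma> t (Suc j) a))) has_vector_derivative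
     frechet_derivative \<tau>inv (at ?h) (dRight m e ?h (Ad m iv e ?h (zeta (gd (Suc j) a) w') - zeta (gd j a) w))) (at 0)"
    by (rule curve_chain[OF tinv_diff[OF hV] q]) (use c1 c2 in \<open>simp add: Gcurve_def\<close>)
  from hvd_scale[OF this, of "1/dt"] show ?thesis
    unfolding dRtauinv_def xi_props(2)[OF assms(1,2)] unfolding dxi_def .
qed

lemma eta_deriv:
  assumes "j < N" "a < A"
    and c1: "Gcurve (\<lambda>t. \<gamma> t j a) (gd j a) w" and c2: "Gcurve (\<lambda>t. \<gamma> t j (Suc a)) (gd j (Suc a)) w'"
  shows "((\<lambda>t. ETA (\<gamma> t) j a) has_vector_derivative (1/ds) *\<^sub>R dRtauinv m e \<tau> \<tau>inv (ds *\<^sub>R ETA gd j a)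
           (Ad m iv e (\<tau> (ds *\<^sub>R ETA gd j a)) (zeta (gd j (Suc a)) w') - zeta (gd j a) w)) (at 0)"
proof -
  let ?h = "m (iv (gd j a)) (gd j (Suc a))"
  have hV: "?h \<in> V" using assms gdV by blast
  have q: "((\<lambda>t. m (iv (\<gamma> t j a)) (\<gamma> t j (Suc a))) has_vector_derivative
     dRight m e ?h (Ad m iv e ?h (zeta (gd j (Suc a)) w') - zeta (gd j a) w)) (at 0)"
    using quot_deriv[OF c1 c2] .
  have "((\<lambda>t. \<tau>inv (m (iv (\<gamma> t j a)) (\<gamma> t j (Suc a)))) has_vector_derivative
     frechet_derivative \<tau>inv (at ?h) (dRight m e ?h (Ad m iv e ?h (zeta (gd j (Suc a)) w') - zeta (gd j a) w))) (at 0)"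
    by (rule curve_chain[OF tinv_diff[OF hV] q]) (use c1 c2 in \<open>simp add: Gcurve_def\<close>)
  from hvd_scale[OF this, of "1/ds"] show ?thesis
    unfolding dRtauinv_def eta_props(2)[OF assms(1,2)] unfolding deta_def .
qed

definition Hx where "Hx j a = \<tau> (dt *\<^sub>R XI gd j a)"
definition He where "He j a = \<tau> (ds *\<^sub>R ETA gd j a)"

lemma tri_deriv:
  assumes ja: "j < N" "a < A"
    and c0: "Gcurve (\<lambda>t. \<gamma> t j a) (gd j a) w"
    and c1: "Gcurve (\<lambda>t. \<gamma> t (Suc j) a) (gd (Suc j) a) w1"
    and c2: "Gcurve (\<lambda>t. \<gamma> t j (Suc a)) (gd j (Suc a)) w2"
  shows "((\<lambda>t. Ld j a (\<gamma> t j a) (XI (\<gamma> t) j a) (ETA (\<gamma> t) j a)) has_vector_derivative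
     DG j a (zeta (gd j a) w)
     + (1/dt) * (Adstar m iv e (Hx j a) (MU j a) (zeta (gd (Suc j) a) w1) - MU j a (zeta (gd j a) w))
     + (1/ds) * (Adstar m iv e (He j a) (LAM j a) (zeta (gd j (Suc a)) w2) - LAM j a (zeta (gd j a) w))) (at 0)"
proof -
  let ?L = "\<lambda>(x, y, z). Ld j a x y z"
  let ?p = "(gd j a, XI gd j a, ETA gd j a)"
  let ?vx = "(1/dt) *\<^sub>R dRtauinv m e \<tau> \<tau>inv (dt *\<^sub>R XI gd j a) (Ad m iv e (Hx j a) (zeta (gd (Suc j) a) w1) - zeta (gd j a) w)"
  let ?ve = "(1/ds) *\<^sub>R dRtauinv m e \<tau> \<tau>inv (ds *\<^sub>R ETA gd j a) (Ad m iv e (He j a) (zeta (gd j (Suc a)) w2) - zeta (gd j a) w)"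
  have c0': "(\<lambda>t. \<gamma> t j a) 0 = gd j a" "((\<lambda>t. \<gamma> t j a) has_vector_derivative w) (at 0)"
    using c0 unfolding Gcurve_def by auto
  have g0: "\<gamma> 0 = gd \<Longrightarrow> True" by simp
  have tc: "((\<lambda>t. (\<gamma> t j a, XI (\<gamma> t) j a, ETA (\<gamma> t) j a)) has_vector_derivative (w, ?vx, ?ve)) (at 0)"
    using xi_deriv[where \<gamma>=\<gamma>, OF ja c0 c1] eta_deriv[where \<gamma>=\<gamma>, OF ja c0 c2] c0'(2) unfolding Hx_def He_def
    by (intro has_vector_derivative_Pair) auto
  have d: "?L differentiable (at ?p)" using L_diff[OF ja] .
  have at0: "(\<gamma> 0 j a, XI (\<gamma> 0) j a, ETA (\<gamma> 0) j a) = ?p"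
  proof -
    have "\<gamma> 0 j a = gd j a" "\<gamma> 0 (Suc j) a = gd (Suc j) a" "\<gamma> 0 j (Suc a) = gd j (Suc a)"
      using c0 c1 c2 unfolding Gcurve_def by auto
    then show ?thesis unfolding dxi_def deta_def by simp
  qed
  have "((\<lambda>t. ?L (\<gamma> t j a, XI (\<gamma> t) j a, ETA (\<gamma> t) j a)) has_vector_derivative
      frechet_derivative ?L (at ?p) (w, ?vx, ?ve)) (at 0)"
    using curve_chain[OF d tc at0] .
  then have D: "((\<lambda>t. Ld j a (\<gamma> t j a) (XI (\<gamma> t) j a) (ETA (\<gamma> t) j a)) has_vector_derivative
      frechet_derivative (\<lambda>x. Ld j a x (XI gd j a) (ETA gd j a)) (at (gd j a)) w
    + frechet_derivative (\<lambda>y. Ld j a (gd j a) y (ETA gd j a)) (at (XI gd j a)) ?vx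
    + frechet_derivative (\<lambda>z. Ld j a (gd j a) (XI gd j a) z) (at (ETA gd j a)) ?ve) (at 0)"
    using triple_split[OF d, of w ?vx ?ve] by simp
  have l1: "linear (frechet_derivative (\<lambda>y. Ld j a (gd j a) y (ETA gd j a)) (at (XI gd j a)))"
    using fd_linear triple_diff_parts(2)[OF d] by simp
  have l2: "linear (frechet_derivative (\<lambda>z. Ld j a (gd j a) (XI gd j a) z) (at (ETA gd j a)))"
    using fd_linear triple_diff_parts(3)[OF d] by simp
  have e0: "frechet_derivative (\<lambda>x. Ld j a x (XI gd j a) (ETA gd j a)) (at (gd j a)) w = DG j a (zeta (gd j a) w)"
    unfolding dDgL_def using gc_trans(2)[OF c0] by simp
  have e1: "frechet_derivative (\<lambda>y. Ld j a (gd j a) y (ETA gd j a)) (at (XI gd j a)) ?vx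
     = (1/dt) * (Adstar m iv e (Hx j a) (MU j a) (zeta (gd (Suc j) a) w1) - MU j a (zeta (gd j a) w))"
  proof -
    have "frechet_derivative (\<lambda>y. Ld j a (gd j a) y (ETA gd j a)) (at (XI gd j a)) ?vx
       = (1/dt) * MU j a (Ad m iv e (Hx j a) (zeta (gd (Suc j) a) w1) - zeta (gd j a) w)"
      unfolding dmu_def using linear_scale[OF l1] by simp
    also have "\<dots> = (1/dt) * (Adstar m iv e (Hx j a) (MU j a) (zeta (gd (Suc j) a) w1) - MU j a (zeta (gd j a) w))"
      unfolding Adstar_def using linear_diff[OF mu_lin[OF ja]] by simp
    finally show ?thesis .
  qed
  have e2: "frechet_derivative (\<lambda>z. Ld j a (gd j a) (XI gd j a) z) (at (ETA gd j a)) ?ve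
     = (1/ds) * (Adstar m iv e (He j a) (LAM j a) (zeta (gd j (Suc a)) w2) - LAM j a (zeta (gd j a) w))"
  proof -
    have "frechet_derivative (\<lambda>z. Ld j a (gd j a) (XI gd j a) z) (at (ETA gd j a)) ?ve
       = (1/ds) * LAM j a (Ad m iv e (He j a) (zeta (gd j (Suc a)) w2) - zeta (gd j a) w)"
      unfolding dlam_def using linear_scale[OF l2] by simp
    also have "\<dots> = (1/ds) * (Adstar m iv e (He j a) (LAM j a) (zeta (gd j (Suc a)) w2) - LAM j a (zeta (gd j a) w))"
      unfolding Adstar_def using linear_diff[OF lam_lin[OF ja]] by simp
    finally show ?thesis .
  qed
  show ?thesis using D unfolding e0 e1 e2 .
qed

end

lemma H1: "(\<Sum>j\<le>(N::nat). if j < N then f j else 0) = (\<Sum>j<N. f j :: real)"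
proof -
  have "{..N} \<inter> {j. j < N} = {..<N}" by auto
  then show ?thesis by (simp add: sum.If_cases)
qed

lemma H2: "(\<Sum>j\<le>N. if 0 < j then f j else 0) = (\<Sum>j<N. f (Suc j) :: real)"
  by (induct N) auto

lemma sum_if_out: "(\<Sum>a\<in>S. if P then f a else 0) = (if P then \<Sum>a\<in>S. f a else (0::real))"
  by auto

lemma reidx:
  fixes X :: "nat \<Rightarrow> nat \<Rightarrow> real" and Y W :: "nat \<Rightarrow> nat \<Rightarrow> 'a \<Rightarrow> real" and Z :: "nat \<Rightarrow> nat \<Rightarrow> 'a"
  shows "(\<Sum>j<N. \<Sum>a<A. X j a + Y j a (Z (Suc j) a) + W j a (Z j (Suc a))) =
    (\<Sum>j\<le>N. \<Sum>a\<le>A. (if j < N then if a < A then X j a else 0 else 0)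
        + (if 0 < j then if a < A then Y (j - 1) a (Z j a) else 0 else 0)
        + (if j < N then if 0 < a then W j (a - 1) (Z j a) else 0 else 0))"
proof -
  have 1: "(\<Sum>j\<le>N. \<Sum>a\<le>A. (if j < N then if a < A then X j a else 0 else 0)) = (\<Sum>j<N. \<Sum>a<A. X j a)"
    by (simp add: sum_if_out H1)
  have 2: "(\<Sum>j\<le>N. \<Sum>a\<le>A. (if 0 < j then if a < A then Y (j - 1) a (Z j a) else 0 else 0))
     = (\<Sum>j<N. \<Sum>a<A. Y j a (Z (Suc j) a))"
    by (simp add: sum_if_out H1 H2)
  have 3: "(\<Sum>j\<le>N. \<Sum>a\<le>A. (if j < N then if 0 < a then W j (a - 1) (Z j a) else 0 else 0))
     = (\<Sum>j<N. \<Sum>a<A. W j a (Z j (Suc a)))"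
    by (simp add: sum_if_out H1 H2)
  show ?thesis by (simp add: sum.distrib 1 2 3)
qed

context ST begin

definition EE :: "nat \<Rightarrow> nat \<Rightarrow> 'e \<Rightarrow> real" where
  "EE j a \<zeta> = (if j < N then if a < A then DG j a \<zeta> - (1/dt) * MU j a \<zeta> - (1/ds) * LAM j a \<zeta> else 0 else 0)
        + (if 0 < j then if a < A then (1/dt) * Adstar m iv e (Hx (j - 1) a) (MU (j - 1) a) \<zeta> else 0 else 0)
        + (if j < N then if 0 < a then (1/ds) * Adstar m iv e (He j (a - 1)) (LAM j (a - 1)) \<zeta> else 0 else 0)"

lemma act_deriv:
  assumes gc: "\<forall>j\<le>N. \<forall>a\<le>A. Gcurve (\<lambda>t. \<gamma> t j a) (gd j a) (dg j a)"
  shows "((\<lambda>t. action m iv \<tau>inv Ld dt ds N A (\<gamma> t)) has_real_derivative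
           (\<Sum>j\<le>N. \<Sum>a\<le>A. EE j a (zeta (gd j a) (dg j a)))) (at 0)"
proof -
  let ?Z = "\<lambda>j a. zeta (gd j a) (dg j a)"
  define T where "T j a = DG j a (?Z j a)
     + (1/dt) * (Adstar m iv e (Hx j a) (MU j a) (?Z (Suc j) a) - MU j a (?Z j a))
     + (1/ds) * (Adstar m iv e (He j a) (LAM j a) (?Z j (Suc a)) - LAM j a (?Z j a))" for j a
  have each: "((\<lambda>t. Ld j a (\<gamma> t j a) (XI (\<gamma> t) j a) (ETA (\<gamma> t) j a)) has_vector_derivative T j a) (at 0)"
    if "j < N" "a < A" for j a
    unfolding T_def by (rule tri_deriv) (use that gc in auto)
  have "((\<lambda>t. \<Sum>j<N. \<Sum>a<A. Ld j a (\<gamma> t j a) (XI (\<gamma> t) j a) (ETA (\<gamma> t) j a))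
      has_vector_derivative (\<Sum>j<N. \<Sum>a<A. T j a)) (at 0)"
    by (intro has_vector_derivative_sum each) auto
  moreover have "(\<Sum>j<N. \<Sum>a<A. T j a) = (\<Sum>j\<le>N. \<Sum>a\<le>A. EE j a (?Z j a))"
  proof -
    have "(\<Sum>j<N. \<Sum>a<A. T j a) = (\<Sum>j<N. \<Sum>a<A.
        (DG j a (?Z j a) - (1/dt) * MU j a (?Z j a) - (1/ds) * LAM j a (?Z j a))
      + (\<lambda>j a \<zeta>. (1/dt) * Adstar m iv e (Hx j a) (MU j a) \<zeta>) j a (?Z (Suc j) a)
      + (\<lambda>j a \<zeta>. (1/ds) * Adstar m iv e (He j a) (LAM j a) \<zeta>) j a (?Z j (Suc a)))"
      unfolding T_def by (intro sum.cong refl) (simp add: algebra_simps)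
    also have "\<dots> = (\<Sum>j\<le>N. \<Sum>a\<le>A. EE j a (?Z j a))"
      unfolding EE_def
      by (rule reidx[where X="\<lambda>j a. DG j a (?Z j a) - (1/dt) * MU j a (?Z j a) - (1/ds) * LAM j a (?Z j a)"
         and Y="\<lambda>j a \<zeta>. (1/dt) * Adstar m iv e (Hx j a) (MU j a) \<zeta>"
         and W="\<lambda>j a \<zeta>. (1/ds) * Adstar m iv e (He j a) (LAM j a) \<zeta>" and Z="?Z"])
    finally show ?thesis .
  qed
  ultimately show ?thesis
    unfolding has_real_derivative_iff_has_vector_derivative action_def by simp
qed

lemma EE_zero: assumes "j \<le> N" "a \<le> A" shows "EE j a 0 = 0"
proof -
  have "DG j a 0 = 0" "MU j a 0 = 0" "LAM j a 0 = 0" if "j < N" "a < A"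
    using linear_0[OF DG_lin[OF that]] linear_0[OF mu_lin[OF that]] linear_0[OF lam_lin[OF that]] by auto
  moreover have "Adstar m iv e (Hx (j - 1) a) (MU (j - 1) a) 0 = 0" if "0 < j" "j < Suc N" "a < A"
  proof -
    have ja: "j - 1 < N" using that by auto
    have "Hx (j - 1) a \<in> G" unfolding Hx_def using xi_props(2)[OF ja that(3)] gd_in ja that by simp
    then show ?thesis unfolding Adstar_def using linear_0[OF Ad_lin] linear_0[OF mu_lin[OF ja that(3)]] by simp
  qed
  moreover have "Adstar m iv e (He j (a - 1)) (LAM j (a - 1)) 0 = 0" if "0 < a" "a < Suc A" "j < N"
  proof -
    have ja: "a - 1 < A" using that by auto
    have "He j (a - 1) \<in> G" unfolding He_def using eta_props(2)[OF that(3) ja] gd_in ja that by simp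
    then show ?thesis unfolding Adstar_def using linear_0[OF Ad_lin] linear_0[OF lam_lin[OF that(3) ja]] by simp
  qed
  ultimately show ?thesis unfolding EE_def using assms by auto
qed

end

context ST begin

lemma zeta_zero: "g \<in> G \<Longrightarrow> zeta g 0 = 0"
  unfolding zeta_def using linear_0[OF fd_linear[OF mL_diff[OF iv_in]]] by blast

lemma zeta_left:
  assumes "g \<in> G" "Gcurve c e \<zeta>"
  shows "zeta g (dLeft m e g \<zeta>) = \<zeta>"
proof -
  have gl: "Gcurve (\<lambda>t. m g (c t)) g (dLeft m e g \<zeta>)" using gc_left[OF assms] .
  have "Gcurve (\<lambda>t. m (iv g) (m g (c t))) e (zeta g (dLeft m e g \<zeta>))" using gc_trans(1)[OF gl] .
  then have D: "((\<lambda>t. m (iv g) (m g (c t))) has_vector_derivative zeta g (dLeft m e g \<zeta>)) (at 0)"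
    unfolding Gcurve_def by blast
  obtain \<epsilon> where c: "\<epsilon> > 0" "\<forall>t. \<bar>t\<bar> < \<epsilon> \<longrightarrow> c t \<in> G" "(c has_vector_derivative \<zeta>) (at 0)"
    using assms(2) unfolding Gcurve_def by blast
  have "(c has_vector_derivative zeta g (dLeft m e g \<zeta>)) (at 0)"
    by (rule curve_near[OF D c(1)]) (use c(2) assms(1) in auto)
  then show ?thesis using c(3) vector_derivative_unique_at by blast
qed

lemma stat_iff:
  "stationary G (action m iv \<tau>inv Ld dt ds N A) N A fixed gd \<longleftrightarrow>
     (\<forall>j\<le>N. \<forall>a\<le>A. \<not> fixed j a \<longrightarrow> (\<forall>\<zeta>\<in>lie_alg G e. EE j a \<zeta> = 0))"
proof
  assume R: "\<forall>j\<le>N. \<forall>a\<le>A. \<not> fixed j a \<longrightarrow> (\<forall>\<zeta>\<in>lie_alg G e. EE j a \<zeta> = 0)"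
  show "stationary G (action m iv \<tau>inv Ld dt ds N A) N A fixed gd"
    unfolding stationary_def
  proof (intro allI impI, elim conjE)
    fix dg and \<gamma> :: "real \<Rightarrow> nat \<Rightarrow> nat \<Rightarrow> 'e"
    assume fx: "\<forall>j\<le>N. \<forall>a\<le>A. fixed j a \<longrightarrow> dg j a = 0"
      and ep: "\<exists>\<epsilon>>0. \<forall>t. \<bar>t\<bar> < \<epsilon> \<longrightarrow> (\<forall>j\<le>N. \<forall>a\<le>A. \<gamma> t j a \<in> G)"
      and c0: "\<forall>j\<le>N. \<forall>a\<le>A. \<gamma> 0 j a = gd j a \<and> ((\<lambda>t. \<gamma> t j a) has_vector_derivative dg j a) (at 0)"
    have gc: "\<forall>j\<le>N. \<forall>a\<le>A. Gcurve (\<lambda>t. \<gamma> t j a) (gd j a) (dg j a)"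
      unfolding Gcurve_def using ep c0 by blast
    have "EE j a (zeta (gd j a) (dg j a)) = 0" if "j \<le> N" "a \<le> A" for j a
    proof (cases "fixed j a")
      case True
      then show ?thesis using fx that zeta_zero gd_in EE_zero by simp
    next
      case False
      have "zeta (gd j a) (dg j a) \<in> lie_alg G e"
        unfolding lie_alg_def using gc_tangent[OF gc_trans(1)] gc that by blast
      then show ?thesis using R False that by blast
    qed
    then have "(\<Sum>j\<le>N. \<Sum>a\<le>A. EE j a (zeta (gd j a) (dg j a))) = 0" by simp
    then show "((\<lambda>t. action m iv \<tau>inv Ld dt ds N A (\<gamma> t)) has_real_derivative 0) (at 0)"
      using act_deriv[OF gc] by simp
  qed
next
  assume S: "stationary G (action m iv \<tau>inv Ld dt ds N A) N A fixed gd"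
  show "\<forall>j\<le>N. \<forall>a\<le>A. \<not> fixed j a \<longrightarrow> (\<forall>\<zeta>\<in>lie_alg G e. EE j a \<zeta> = 0)"
  proof (intro allI impI ballI)
    fix j0 a0 \<zeta> assume j0: "j0 \<le> N" and a0: "a0 \<le> A" and nf: "\<not> fixed j0 a0" and z: "\<zeta> \<in> lie_alg G e"
    obtain c where c: "Gcurve c e \<zeta>" using tangent_gc z unfolding lie_alg_def by blast
    obtain \<epsilon> where ce: "\<epsilon> > 0" "\<forall>t. \<bar>t\<bar> < \<epsilon> \<longrightarrow> c t \<in> G" "c 0 = e" "(c has_vector_derivative \<zeta>) (at 0)"
      using c unfolding Gcurve_def by blast
    let ?g = "gd j0 a0"
    have g: "?g \<in> G" using gd_in j0 a0 by blast
    define \<gamma> where "\<gamma> t j a = (if j = j0 \<and> a = a0 then m ?g (c t) else gd j a)" for t j a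
    define dg where "dg j a = (if j = j0 \<and> a = a0 then dLeft m e ?g \<zeta> else 0)" for j a
    have gl: "Gcurve (\<lambda>t. m ?g (c t)) ?g (dLeft m e ?g \<zeta>)" using gc_left[OF g c] .
    have gcs: "Gcurve (\<lambda>t. \<gamma> t j a) (gd j a) (dg j a)" if "j \<le> N" "a \<le> A" for j a
    proof (cases "j = j0 \<and> a = a0")
      case True
      then show ?thesis using gl unfolding \<gamma>_def dg_def by simp
    next
      case False
      then show ?thesis unfolding \<gamma>_def dg_def Gcurve_def using gd_in that
        by (intro conjI exI[of _ 1]) auto
    qed
    have "((\<lambda>t. action m iv \<tau>inv Ld dt ds N A (\<gamma> t)) has_real_derivative 0) (at 0)"
      using S unfolding stationary_def
    proof (elim allE[of _ dg] allE[of _ \<gamma>] mp, intro conjI)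
      show "\<forall>j\<le>N. \<forall>a\<le>A. dg j a \<in> tangent_space G (gd j a)" using gcs gc_tangent by blast
      show "\<forall>j\<le>N. \<forall>a\<le>A. fixed j a \<longrightarrow> dg j a = 0" using nf unfolding dg_def by auto
      show "\<exists>\<epsilon>>0. \<forall>t. \<bar>t\<bar> < \<epsilon> \<longrightarrow> (\<forall>j\<le>N. \<forall>a\<le>A. \<gamma> t j a \<in> G)"
        using ce g gd_in unfolding \<gamma>_def by (intro exI[of _ \<epsilon>]) auto
      show "\<forall>j\<le>N. \<forall>a\<le>A. \<gamma> 0 j a = gd j a \<and> ((\<lambda>t. \<gamma> t j a) has_vector_derivative dg j a) (at 0)"
        using gcs unfolding Gcurve_def by blast
    qed
    moreover have "((\<lambda>t. action m iv \<tau>inv Ld dt ds N A (\<gamma> t)) has_real_derivative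
           (\<Sum>j\<le>N. \<Sum>a\<le>A. EE j a (zeta (gd j a) (dg j a)))) (at 0)"
      using act_deriv gcs by blast
    ultimately have 0: "(\<Sum>j\<le>N. \<Sum>a\<le>A. EE j a (zeta (gd j a) (dg j a))) = 0"
      using DERIV_unique by blast
    have "EE j a (zeta (gd j a) (dg j a)) = (if j = j0 then if a = a0 then EE j0 a0 \<zeta> else 0 else 0)"
      if "j \<le> N" "a \<le> A" for j a
      using zeta_left[OF g c] zeta_zero gd_in EE_zero that unfolding dg_def by auto
    then have "(\<Sum>j\<le>N. \<Sum>a\<le>A. EE j a (zeta (gd j a) (dg j a))) = EE j0 a0 \<zeta>"
      using j0 a0 by (simp add: sum_if_out)
    then show "EE j0 a0 \<zeta> = 0" using 0 by simp
  qed
qed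

end

context ST begin

lemma EE_int:
  assumes "j \<in> {1..N-1}" "a \<in> {1..A-1}"
  shows "EE j a \<zeta> = 0 \<longleftrightarrow>
     (1/dt) * (MU j a \<zeta> - Adstar m iv e (\<tau> (dt *\<^sub>R XI gd (j-1) a)) (MU (j-1) a) \<zeta>)
   + (1/ds) * (LAM j a \<zeta> - Adstar m iv e (\<tau> (ds *\<^sub>R ETA gd j (a-1))) (LAM j (a-1)) \<zeta>)
   = DG j a \<zeta>"
proof -
  have c: "j < N" "a < A" "0 < j" "0 < a" using assms by auto
  show ?thesis unfolding EE_def Hx_def He_def using c by (simp add: algebra_simps) linarith
qed

lemma EE_a0:
  assumes "j \<in> {1..N-1}" "0 < A"
  shows "EE j 0 \<zeta> = 0 \<longleftrightarrow>
     (1/dt) * (MU j 0 \<zeta> - Adstar m iv e (\<tau> (dt *\<^sub>R XI gd (j-1) 0)) (MU (j-1) 0) \<zeta>)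
   + (1/ds) * LAM j 0 \<zeta> = DG j 0 \<zeta>"
proof -
  have c: "j < N" "0 < j" using assms by auto
  show ?thesis unfolding EE_def Hx_def He_def using c assms by (simp add: algebra_simps) linarith
qed

lemma EE_aA:
  assumes "j \<in> {1..N-1}" "0 < A"
  shows "EE j A \<zeta> = 0 \<longleftrightarrow>
     (1/ds) * Adstar m iv e (\<tau> (ds *\<^sub>R ETA gd j (A-1))) (LAM j (A-1)) \<zeta> = 0"
proof -
  have c: "j < N" "0 < j" using assms by auto
  show ?thesis unfolding EE_def Hx_def He_def using c assms by simp
qed

lemma EE_j0:
  assumes "a \<in> {1..A-1}" "0 < N"
  shows "EE 0 a \<zeta> = 0 \<longleftrightarrow>
     (1/dt) * MU 0 a \<zeta>
   + (1/ds) * (LAM 0 a \<zeta> - Adstar m iv e (\<tau> (ds *\<^sub>R ETA gd 0 (a-1))) (LAM 0 (a-1)) \<zeta>) = DG 0 a \<zeta>"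
proof -
  have c: "a < A" "0 < a" using assms by auto
  show ?thesis unfolding EE_def Hx_def He_def using c assms by (simp add: algebra_simps) linarith
qed

lemma EE_jN:
  assumes "a \<in> {1..A-1}" "0 < N"
  shows "EE N a \<zeta> = 0 \<longleftrightarrow>
     (1/dt) * Adstar m iv e (\<tau> (dt *\<^sub>R XI gd (N-1) a)) (MU (N-1) a) \<zeta> = 0"
proof -
  have c: "a < A" "0 < a" using assms by auto
  show ?thesis unfolding EE_def Hx_def He_def using c assms by simp
qed

end

context ST begin

lemma main_ST:
  assumes N2: "N \<ge> 2" and A2: "A \<ge> 2"
  shows "(stationary G (action m iv \<tau>inv Ld dt ds N A) N A
            (\<lambda>j a. j = 0 \<or> j = N \<or> a = 0 \<or> a = A) gd
          \<longleftrightarrow> DCEL G m iv e \<tau> \<tau>inv Ld dt ds N A gd)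
       \<and> (stationary G (action m iv \<tau>inv Ld dt ds N A) N A
            (\<lambda>j a. j = 0 \<or> j = N) gd
          \<longleftrightarrow> DCEL G m iv e \<tau> \<tau>inv Ld dt ds N A gd \<and> boundary_B G m iv e \<tau> \<tau>inv Ld dt ds N A gd)
       \<and> (stationary G (action m iv \<tau>inv Ld dt ds N A) N A
            (\<lambda>j a. a = 0 \<or> a = A) gd
          \<longleftrightarrow> DCEL G m iv e \<tau> \<tau>inv Ld dt ds N A gd \<and> boundary_C G m iv e \<tau> \<tau>inv Ld dt ds N A gd)"
proof -
  have N0: "0 < N" and A0: "0 < A" using N2 A2 by auto
  have DC: "DCEL G m iv e \<tau> \<tau>inv Ld dt ds N A gd \<longleftrightarrow>
      (\<forall>j\<in>{1..N-1}. \<forall>a\<in>{1..A-1}. \<forall>\<zeta>\<in>lie_alg G e. EE j a \<zeta> = 0)"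
    unfolding DCEL_def using EE_int by simp
  have BB: "boundary_B G m iv e \<tau> \<tau>inv Ld dt ds N A gd \<longleftrightarrow>
      (\<forall>j\<in>{1..N-1}. \<forall>\<zeta>\<in>lie_alg G e. EE j 0 \<zeta> = 0 \<and> EE j A \<zeta> = 0)"
    unfolding boundary_B_def using EE_a0[OF _ A0] EE_aA[OF _ A0] by simp
  have CC: "boundary_C G m iv e \<tau> \<tau>inv Ld dt ds N A gd \<longleftrightarrow>
      (\<forall>a\<in>{1..A-1}. \<forall>\<zeta>\<in>lie_alg G e. EE 0 a \<zeta> = 0 \<and> EE N a \<zeta> = 0)"
    unfolding boundary_C_def using EE_j0[OF _ N0] EE_jN[OF _ N0] by simp
  have 1: "(\<forall>j\<le>N. \<forall>a\<le>A. \<not> (j = 0 \<or> j = N \<or> a = 0 \<or> a = A) \<longrightarrow> (\<forall>\<zeta>\<in>lie_alg G e. EE j a \<zeta> = 0))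
     \<longleftrightarrow> (\<forall>j\<in>{1..N-1}. \<forall>a\<in>{1..A-1}. \<forall>\<zeta>\<in>lie_alg G e. EE j a \<zeta> = 0)"
  proof
    assume L: "\<forall>j\<le>N. \<forall>a\<le>A. \<not> (j = 0 \<or> j = N \<or> a = 0 \<or> a = A) \<longrightarrow> (\<forall>\<zeta>\<in>lie_alg G e. EE j a \<zeta> = 0)"
    show "\<forall>j\<in>{1..N-1}. \<forall>a\<in>{1..A-1}. \<forall>\<zeta>\<in>lie_alg G e. EE j a \<zeta> = 0"
    proof (intro ballI)
      fix j a \<zeta> assume h: "j \<in> {1..N-1}" "a \<in> {1..A-1}" "\<zeta> \<in> lie_alg G e"
      then have "j \<le> N" "a \<le> A" "j \<noteq> 0" "j \<noteq> N" "a \<noteq> 0" "a \<noteq> A" by auto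
      then show "EE j a \<zeta> = 0" using L h(3) by blast
    qed
  next
    assume R: "\<forall>j\<in>{1..N-1}. \<forall>a\<in>{1..A-1}. \<forall>\<zeta>\<in>lie_alg G e. EE j a \<zeta> = 0"
    show "\<forall>j\<le>N. \<forall>a\<le>A. \<not> (j = 0 \<or> j = N \<or> a = 0 \<or> a = A) \<longrightarrow> (\<forall>\<zeta>\<in>lie_alg G e. EE j a \<zeta> = 0)"
    proof (intro allI impI ballI)
      fix j a \<zeta> assume "j \<le> N" "a \<le> A" "\<not> (j = 0 \<or> j = N \<or> a = 0 \<or> a = A)" "\<zeta> \<in> lie_alg G e"
      then have "j \<in> {1..N-1}" "a \<in> {1..A-1}" by auto
      then show "EE j a \<zeta> = 0" using R \<open>\<zeta> \<in> lie_alg G e\<close> by blast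
    qed
  qed
  have 2: "(\<forall>j\<le>N. \<forall>a\<le>A. \<not> (j = 0 \<or> j = N) \<longrightarrow> (\<forall>\<zeta>\<in>lie_alg G e. EE j a \<zeta> = 0))
     \<longleftrightarrow> (\<forall>j\<in>{1..N-1}. \<forall>a\<in>{1..A-1}. \<forall>\<zeta>\<in>lie_alg G e. EE j a \<zeta> = 0)
        \<and> (\<forall>j\<in>{1..N-1}. \<forall>\<zeta>\<in>lie_alg G e. EE j 0 \<zeta> = 0 \<and> EE j A \<zeta> = 0)"
  proof
    assume L: "\<forall>j\<le>N. \<forall>a\<le>A. \<not> (j = 0 \<or> j = N) \<longrightarrow> (\<forall>\<zeta>\<in>lie_alg G e. EE j a \<zeta> = 0)"
    have "\<forall>j\<in>{1..N-1}. \<forall>a\<in>{1..A-1}. \<forall>\<zeta>\<in>lie_alg G e. EE j a \<zeta> = 0"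
    proof (intro ballI)
      fix j a \<zeta> assume h: "j \<in> {1..N-1}" "a \<in> {1..A-1}" "\<zeta> \<in> lie_alg G e"
      then have "j \<le> N" "a \<le> A" "j \<noteq> 0" "j \<noteq> N" "a \<noteq> 0" "a \<noteq> A" by auto
      then show "EE j a \<zeta> = 0" using L h(3) by blast
    qed
    moreover have "\<forall>j\<in>{1..N-1}. \<forall>\<zeta>\<in>lie_alg G e. EE j 0 \<zeta> = 0 \<and> EE j A \<zeta> = 0"
    proof (intro ballI)
      fix j \<zeta> assume h: "j \<in> {1..N-1}" "\<zeta> \<in> lie_alg G e"
      then have "j \<le> N" "j \<noteq> 0" "j \<noteq> N" by auto
      then show "EE j 0 \<zeta> = 0 \<and> EE j A \<zeta> = 0" using L h(2) by blast
    qed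
    ultimately show "(\<forall>j\<in>{1..N-1}. \<forall>a\<in>{1..A-1}. \<forall>\<zeta>\<in>lie_alg G e. EE j a \<zeta> = 0)
        \<and> (\<forall>j\<in>{1..N-1}. \<forall>\<zeta>\<in>lie_alg G e. EE j 0 \<zeta> = 0 \<and> EE j A \<zeta> = 0)" by blast
  next
    assume R: "(\<forall>j\<in>{1..N-1}. \<forall>a\<in>{1..A-1}. \<forall>\<zeta>\<in>lie_alg G e. EE j a \<zeta> = 0)
        \<and> (\<forall>j\<in>{1..N-1}. \<forall>\<zeta>\<in>lie_alg G e. EE j 0 \<zeta> = 0 \<and> EE j A \<zeta> = 0)"
    show "\<forall>j\<le>N. \<forall>a\<le>A. \<not> (j = 0 \<or> j = N) \<longrightarrow> (\<forall>\<zeta>\<in>lie_alg G e. EE j a \<zeta> = 0)"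
    proof (intro allI impI ballI)
      fix j a \<zeta> assume h: "j \<le> N" "a \<le> A" "\<not> (j = 0 \<or> j = N)" "\<zeta> \<in> lie_alg G e"
      then have j: "j \<in> {1..N-1}" by auto
      consider "a = 0" | "a = A" | "a \<in> {1..A-1}" using h by force
      then show "EE j a \<zeta> = 0"
        by cases (use R j h in auto)
    qed
  qed
  have 3: "(\<forall>j\<le>N. \<forall>a\<le>A. \<not> (a = 0 \<or> a = A) \<longrightarrow> (\<forall>\<zeta>\<in>lie_alg G e. EE j a \<zeta> = 0))
     \<longleftrightarrow> (\<forall>j\<in>{1..N-1}. \<forall>a\<in>{1..A-1}. \<forall>\<zeta>\<in>lie_alg G e. EE j a \<zeta> = 0)
        \<and> (\<forall>a\<in>{1..A-1}. \<forall>\<zeta>\<in>lie_alg G e. EE 0 a \<zeta> = 0 \<and> EE N a \<zeta> = 0)"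
  proof
    assume L: "\<forall>j\<le>N. \<forall>a\<le>A. \<not> (a = 0 \<or> a = A) \<longrightarrow> (\<forall>\<zeta>\<in>lie_alg G e. EE j a \<zeta> = 0)"
    have "\<forall>j\<in>{1..N-1}. \<forall>a\<in>{1..A-1}. \<forall>\<zeta>\<in>lie_alg G e. EE j a \<zeta> = 0"
    proof (intro ballI)
      fix j a \<zeta> assume h: "j \<in> {1..N-1}" "a \<in> {1..A-1}" "\<zeta> \<in> lie_alg G e"
      then have "j \<le> N" "a \<le> A" "j \<noteq> 0" "j \<noteq> N" "a \<noteq> 0" "a \<noteq> A" by auto
      then show "EE j a \<zeta> = 0" using L h(3) by blast
    qed
    moreover have "\<forall>a\<in>{1..A-1}. \<forall>\<zeta>\<in>lie_alg G e. EE 0 a \<zeta> = 0 \<and> EE N a \<zeta> = 0"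
    proof (intro ballI)
      fix a \<zeta> assume h: "a \<in> {1..A-1}" "\<zeta> \<in> lie_alg G e"
      then have "a \<le> A" "a \<noteq> 0" "a \<noteq> A" by auto
      then show "EE 0 a \<zeta> = 0 \<and> EE N a \<zeta> = 0" using L h(2) by blast
    qed
    ultimately show "(\<forall>j\<in>{1..N-1}. \<forall>a\<in>{1..A-1}. \<forall>\<zeta>\<in>lie_alg G e. EE j a \<zeta> = 0)
        \<and> (\<forall>a\<in>{1..A-1}. \<forall>\<zeta>\<in>lie_alg G e. EE 0 a \<zeta> = 0 \<and> EE N a \<zeta> = 0)" by blast
  next
    assume R: "(\<forall>j\<in>{1..N-1}. \<forall>a\<in>{1..A-1}. \<forall>\<zeta>\<in>lie_alg G e. EE j a \<zeta> = 0)
        \<and> (\<forall>a\<in>{1..A-1}. \<forall>\<zeta>\<in>lie_alg G e. EE 0 a \<zeta> = 0 \<and> EE N a \<zeta> = 0)"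
    show "\<forall>j\<le>N. \<forall>a\<le>A. \<not> (a = 0 \<or> a = A) \<longrightarrow> (\<forall>\<zeta>\<in>lie_alg G e. EE j a \<zeta> = 0)"
    proof (intro allI impI ballI)
      fix j a \<zeta> assume h: "j \<le> N" "a \<le> A" "\<not> (a = 0 \<or> a = A)" "\<zeta> \<in> lie_alg G e"
      then have a: "a \<in> {1..A-1}" by auto
      consider "j = 0" | "j = N" | "j \<in> {1..N-1}" using h by force
      then show "EE j a \<zeta> = 0"
        by cases (use R a h in auto)
    qed
  qed
  show ?thesis using stat_iff 1 2 3 DC BB CC by simp
qed

end

theorem mainTheorem12:
  fixes G :: "'e::euclidean_space set"
    and m :: "'e \<Rightarrow> 'e \<Rightarrow> 'e" and iv :: "'e \<Rightarrow> 'e" and e :: 'e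
    and \<tau> \<tau>inv :: "'e \<Rightarrow> 'e" and U V :: "'e set"
    and Ld :: "nat \<Rightarrow> nat \<Rightarrow> 'e \<Rightarrow> 'e \<Rightarrow> 'e \<Rightarrow> real"
    and dt ds :: real and N A :: nat
    and gd :: "nat \<Rightarrow> nat \<Rightarrow> 'e"
  assumes "N \<ge> 2" and "A \<ge> 2"
    and "lie_group G m iv e"
    and "tau_chart G e \<tau> \<tau>inv U V"
    and "dt > 0" and "ds > 0"
    and "\<forall>j<N. \<forall>a<A. \<exists>W. G \<times> lie_alg G e \<times> lie_alg G e \<subseteq> W \<and>
                         smooth_on W (\<lambda>(x, y, z). Ld j a x y z)"
    and "\<forall>j\<le>N. \<forall>a\<le>A. gd j a \<in> G"
    and "\<forall>j<N. \<forall>a<A. m (iv (gd j a)) (gd (Suc j) a) \<in> V \<and> m (iv (gd j a)) (gd j (Suc a)) \<in> V"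
  shows "(stationary G (action m iv \<tau>inv Ld dt ds N A) N A
            (\<lambda>j a. j = 0 \<or> j = N \<or> a = 0 \<or> a = A) gd
          \<longleftrightarrow> DCEL G m iv e \<tau> \<tau>inv Ld dt ds N A gd)
       \<and> (stationary G (action m iv \<tau>inv Ld dt ds N A) N A
            (\<lambda>j a. j = 0 \<or> j = N) gd
          \<longleftrightarrow> DCEL G m iv e \<tau> \<tau>inv Ld dt ds N A gd \<and> boundary_B G m iv e \<tau> \<tau>inv Ld dt ds N A gd)
       \<and> (stationary G (action m iv \<tau>inv Ld dt ds N A) N A
            (\<lambda>j a. a = 0 \<or> a = A) gd
          \<longleftrightarrow> DCEL G m iv e \<tau> \<tau>inv Ld dt ds N A gd \<and> boundary_C G m iv e \<tau> \<tau>inv Ld dt ds N A gd)"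
proof -
  interpret ST G m iv e \<tau> \<tau>inv U V Ld dt ds N A gd
    by (unfold_locales) (use assms in auto)
  show ?thesis using main_ST assms(1,2) by blast
qed

end
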